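(* Let $\mathcal{S}(\vec{x},\vec{a})$ be a specification over $\vec{a}$, where $\vec{x}$ and $\vec{a}$ are disjoint lists of Boolean variables. Let $\alpha$ be any assignment of the variables $\vec{x}$. Then $\alpha$ can be extended to an assignment $\beta$ of $\vec{x},\vec{a}$ such that (1) $\beta$ satisfies $\mathcal{S}$, and (2) $\alpha(x)=\beta(x)$ for every $x\in\vec{x}$.
   Context: A literal over a Boolean variable $x$ is $x$ or $\bar{x}=1-x$. A pseudo-Boolean (PB) constraint is $C\doteq\sum_i a_i\ell_i\ge A$ with integer $a_i,A$ and literals $\ell_i$; its negation is $\neg C\doteq\sum_i a_i\bar{\ell}_i\ge \sum_i a_i-A+1$. A formula is a finite set (conjunction) of PB constraints. A substitution (witness) $\omega$ maps variables to $0$, $1$ or literals, extended by $\omega(\bar x)=\overline{\omega(x)}$, $\omega(0)=0$, $\omega(1)=1$; its support is $\mathrm{supp}(\omega)=\{x:\omega(x)\ne x\}$. $C{\upharpoonright}_\omega\doteq\sum_i a_i\omega(\ell_i)\ge A$, and $F{\upharpoonright}_\omega=\{C{\upharpoonright}_\omega : C\in F\}$. For formulas $F,G$, $F\vdash G$ means every constraint of $G$ can be derived from $F$ in the cutting planes proof system (a sound system, so every assignment satisfying $F$ satisfies $G$). A formula $\mathcal{S}(\vec x,\vec a)=\{C_1,\dots,C_n\}$ is a specification over $\vec a$ if there are substitutions $\omega_1,\dots,\omega_n$ with $\mathrm{supp}(\omega_i)\subseteq\vec a$ for all $i$ such that for each $i\in\{1,\dots,n\}$: $\{C_1,\dots,C_{i-1}\}\cup\{\neg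 C_i\}\vdash\{C_1{\upharpoonright}_{\omega_i},\dots,C_i{\upharpoonright}_{\omega_i}\}$ (for $i=1$ the left-hand side is just $\{\neg C_1\}$). *)

theory Defs
  imports Main
begin

datatype 'v lit = Pos 'v | Neg 'v

fun lneg :: "'v lit \<Rightarrow> 'v lit" where
  "lneg (Pos x) = Neg x"
| "lneg (Neg x) = Pos x"

fun lit_var :: "'v lit \<Rightarrow> 'v" where
  "lit_var (Pos x) = x"
| "lit_var (Neg x) = x"

record 'v pbc =
  terms :: "(int \<times> 'v lit) list"
  degree :: int

fun lit_val :: "('v \<Rightarrow> bool) \<Rightarrow> 'v lit \<Rightarrow> bool" where
  "lit_val \<beta> (Pos x) = \<beta> x"
| "lit_val \<beta> (Neg x) = (\<not> \<beta> x)"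

definition sat :: "('v \<Rightarrow> bool) \<Rightarrow> 'v pbc \<Rightarrow> bool" where
  "sat \<beta> C \<longleftrightarrow>
     (\<Sum>(a, l) \<leftarrow> terms C. a * (if lit_val \<beta> l then 1 else 0)) \<ge> degree C"

definition pbc_vars :: "'v pbc \<Rightarrow> 'v set" where
  "pbc_vars C = lit_var ` snd ` set (terms C)"

definition pbc_neg :: "'v pbc \<Rightarrow> 'v pbc" where
  "pbc_neg C = \<lparr> terms = map (\<lambda>(a, l). (a, lneg l)) (terms C),
                 degree = (\<Sum>(a, l) \<leftarrow> terms C. a) - degree C + 1 \<rparr>"

datatype 'v sval = SConst bool | SLit "'v lit"

type_synonym 'v subst = "'v \<Rightarrow> 'v sval"

fun sval_neg :: "'v sval \<Rightarrow> 'v sval" where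
  "sval_neg (SConst b) = SConst (\<not> b)"
| "sval_neg (SLit l) = SLit (lneg l)"

fun subst_lit :: "'v subst \<Rightarrow> 'v lit \<Rightarrow> 'v sval" where
  "subst_lit \<omega> (Pos x) = \<omega> x"
| "subst_lit \<omega> (Neg x) = sval_neg (\<omega> x)"

definition supp :: "'v subst \<Rightarrow> 'v set" where
  "supp \<omega> = {x. \<omega> x \<noteq> SLit (Pos x)}"

definition restrict :: "'v pbc \<Rightarrow> 'v subst \<Rightarrow> 'v pbc" where
  "restrict C \<omega> =
     \<lparr> terms = concat (map (\<lambda>(a, l). case subst_lit \<omega> l of SLit l' \<Rightarrow> [(a, l')] | SConst _ \<Rightarrow> [])
                          (terms C)),
       degree = degree C -
         (\<Sum>(a, l) \<leftarrow> terms C. if subst_lit \<omega> l = SConst True then a else 0) \<rparr>"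

text \<open>Linear normal form over variables (using  not x = 1 - x):
  a pair (c, A) standing for  sum_x c(x) * x >= A.\<close>
type_synonym 'v linc = "('v \<Rightarrow> int) \<times> int"

definition lin :: "'v pbc \<Rightarrow> 'v linc" where
  "lin C = ((\<lambda>x. (\<Sum>(a, l) \<leftarrow> terms C.
                    if l = Pos x then a else if l = Neg x then - a else 0)),
            degree C - (\<Sum>(a, l) \<leftarrow> terms C. case l of Neg _ \<Rightarrow> a | Pos _ \<Rightarrow> 0))"

inductive cp_derivable :: "'v pbc set \<Rightarrow> 'v linc \<Rightarrow> bool" for F :: "'v pbc set" where
  cp_axiom: "C \<in> F \<Longrightarrow> cp_derivable F (lin C)"
| cp_lit_pos: "cp_derivable F ((\<lambda>y. if y = x then 1 else 0), 0)"
| cp_lit_neg: "cp_derivable F ((\<lambda>y. if y = x then -1 else 0), -1)"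
| cp_add: "cp_derivable F (c, A) \<Longrightarrow> cp_derivable F (d, B)
            \<Longrightarrow> cp_derivable F ((\<lambda>x. c x + d x), A + B)"
| cp_mult: "cp_derivable F (c, A) \<Longrightarrow> k > 0
            \<Longrightarrow> cp_derivable F ((\<lambda>x. k * c x), k * A)"
| cp_div: "cp_derivable F (c, A) \<Longrightarrow> d > 0 \<Longrightarrow> (\<forall>x. d dvd c x)
            \<Longrightarrow> cp_derivable F ((\<lambda>x. c x div d), - ((- A) div d))"

definition cp_derives :: "'v pbc set \<Rightarrow> 'v pbc set \<Rightarrow> bool" where
  "cp_derives F G \<longleftrightarrow> (\<forall>D \<in> G. cp_derivable F (lin D))"

text \<open>S = [C_1, ..., C_n] (0-indexed here) is a specification over the variable set As.\<close>
definition is_specification :: "'v pbc list \<Rightarrow> 'v set \<Rightarrow> bool" where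
  "is_specification S As \<longleftrightarrow>
     (\<exists>\<omega> :: nat \<Rightarrow> 'v subst.
        \<forall>i < length S. supp (\<omega> i) \<subseteq> As \<and>
          cp_derives (set (take i S) \<union> {pbc_neg (S ! i)})
                     ((\<lambda>C. restrict C (\<omega> i)) ` set (take (Suc i) S)))"

end

theory Submission imports Defs begin

definition bv :: "('v \<Rightarrow> bool) \<Rightarrow> 'v \<Rightarrow> int" where
  "bv \<beta> x = (if \<beta> x then 1 else 0)"

definition lsat :: "('v \<Rightarrow> bool) \<Rightarrow> 'v linc \<Rightarrow> bool" where
  "lsat \<beta> p \<longleftrightarrow> finite {x. fst p x \<noteq> 0} \<and>
     snd p \<le> (\<Sum>x\<in>{x. fst p x \<noteq> 0}. fst p x * bv \<beta> x)"

lemma single_term: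
  assumes "finite V" "lit_var l \<in> V"
  shows "(\<Sum>x\<in>V. (if l = Pos x then a else if l = Neg x then - a else 0) * bv \<beta> x)
     = (case l of Pos y \<Rightarrow> a * bv \<beta> y | Neg y \<Rightarrow> - a * bv \<beta> y)"
proof (cases l)
  case (Pos y)
  have "(\<Sum>x\<in>V. (if l = Pos x then a else if l = Neg x then - a else 0) * bv \<beta> x)
     = (\<Sum>x\<in>V. if x = y then a * bv \<beta> x else 0)"
    by (rule sum.cong) (auto simp: Pos)
  also have "\<dots> = a * bv \<beta> y" using assms Pos by (simp add: sum.delta')
  finally show ?thesis using Pos by simp
next
  case (Neg y)
  have "(\<Sum>x\<in>V. (if l = Pos x then a else if l = Neg x then - a else 0) * bv \<beta> x)
     = (\<Sum>x\<in>V. if x = y then - a * bv \<beta> x else 0)"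
    by (rule sum.cong) (auto simp: Neg)
  also have "\<dots> = - a * bv \<beta> y" using assms Neg by (simp add: sum.delta')
  finally show ?thesis using Neg by simp
qed

lemma lin_sum:
  assumes "finite V" "lit_var ` snd ` set ts \<subseteq> V"
  shows "(\<Sum>(a,l)\<leftarrow>ts. a * (if lit_val \<beta> l then 1 else 0)) =
    (\<Sum>x\<in>V. (\<Sum>(a,l)\<leftarrow>ts. if l = Pos x then a else if l = Neg x then -a else 0) * bv \<beta> x)
    + (\<Sum>(a,l)\<leftarrow>ts. case l of Neg _ \<Rightarrow> a | Pos _ \<Rightarrow> 0)"
  using assms(2)
proof (induction ts)
  case Nil
  then show ?case by simp
next
  case (Cons t ts)
  obtain a l where t: "t = (a, l)" by (cases t)
  have lv: "lit_var l \<in> V" using Cons.prems t by auto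
  have IH: "(\<Sum>(a,l)\<leftarrow>ts. a * (if lit_val \<beta> l then 1 else 0)) =
    (\<Sum>x\<in>V. (\<Sum>(a,l)\<leftarrow>ts. if l = Pos x then a else if l = Neg x then -a else 0) * bv \<beta> x)
    + (\<Sum>(a,l)\<leftarrow>ts. case l of Neg _ \<Rightarrow> a | Pos _ \<Rightarrow> 0)"
    using Cons by auto
  have "(\<Sum>x\<in>V. (\<Sum>(a,l)\<leftarrow>t#ts. if l = Pos x then a else if l = Neg x then -a else 0) * bv \<beta> x)
    = (\<Sum>x\<in>V. (if l = Pos x then a else if l = Neg x then - a else 0) * bv \<beta> x)
     + (\<Sum>x\<in>V. (\<Sum>(a,l)\<leftarrow>ts. if l = Pos x then a else if l = Neg x then -a else 0) * bv \<beta> x)"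
    by (simp add: t distrib_right sum.distrib)
  also have "(\<Sum>x\<in>V. (if l = Pos x then a else if l = Neg x then - a else 0) * bv \<beta> x)
     = (case l of Pos y \<Rightarrow> a * bv \<beta> y | Neg y \<Rightarrow> - a * bv \<beta> y)"
    using single_term[OF assms(1) lv] .
  finally show ?case using IH
    by (cases l) (auto simp: t bv_def algebra_simps)
qed

lemma supp_sum:
  fixes c :: "'v \<Rightarrow> int"
  assumes "finite V" "{x. c x \<noteq> 0} \<subseteq> V"
  shows "(\<Sum>x\<in>{x. c x \<noteq> 0}. c x * b x) = (\<Sum>x\<in>V. c x * b x)"
  by (rule sum.mono_neutral_left) (use assms in auto)

lemma finite_pbc_vars: "finite (pbc_vars C)"
  by (simp add: pbc_vars_def)

lemma zero_terms: "\<forall>(a,l)\<in>set ts. l \<noteq> Pos x \<and> l \<noteq> Neg x \<Longrightarrow>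
  (\<Sum>(a, l)\<leftarrow>ts. if l = Pos x then (a::int) else if l = Neg x then - a else 0) = 0"
  by (induction ts) auto

lemma lin_supp: "{x. fst (lin C) x \<noteq> 0} \<subseteq> pbc_vars C"
proof
  fix x assume "x \<in> {x. fst (lin C) x \<noteq> 0}"
  hence ne: "(\<Sum>(a, l)\<leftarrow>terms C. if l = Pos x then a else if l = Neg x then - a else 0) \<noteq> 0"
    by (simp add: lin_def)
  show "x \<in> pbc_vars C"
  proof (rule ccontr)
    assume "x \<notin> pbc_vars C"
    hence "\<forall>(a,l)\<in>set (terms C). l \<noteq> Pos x \<and> l \<noteq> Neg x"
      by (force simp: pbc_vars_def)
    hence "(\<Sum>(a, l)\<leftarrow>terms C. if l = Pos x then a else if l = Neg x then - a else 0) = 0"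
      by (rule zero_terms)
    with ne show False by simp
  qed
qed

lemma sat_lin: "sat \<beta> C \<longleftrightarrow> lsat \<beta> (lin C)"
proof -
  have fin: "finite {x. fst (lin C) x \<noteq> 0}"
    by (rule finite_subset[OF lin_supp finite_pbc_vars])
  have "(\<Sum>x\<in>{x. fst (lin C) x \<noteq> 0}. fst (lin C) x * bv \<beta> x) = (\<Sum>x\<in>pbc_vars C. fst (lin C) x * bv \<beta> x)"
    by (rule supp_sum[OF finite_pbc_vars lin_supp])
  moreover have "(\<Sum>(a,l)\<leftarrow>terms C. a * (if lit_val \<beta> l then 1 else 0)) =
    (\<Sum>x\<in>pbc_vars C. fst (lin C) x * bv \<beta> x)
    + (\<Sum>(a,l)\<leftarrow>terms C. case l of Neg _ \<Rightarrow> a | Pos _ \<Rightarrow> 0)"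
    unfolding lin_def fst_conv
    by (rule lin_sum[OF finite_pbc_vars]) (simp add: pbc_vars_def)
  moreover have "snd (lin C) = degree C - (\<Sum>(a,l)\<leftarrow>terms C. case l of Neg _ \<Rightarrow> a | Pos _ \<Rightarrow> 0)"
    by (simp add: lin_def)
  ultimately show ?thesis using fin
    unfolding sat_def lsat_def by linarith
qed

lemma div_ceil_le:
  fixes S A d :: int
  assumes "A \<le> S" "d > 0" "d dvd S"
  shows "- ((- A) div d) \<le> S div d"
proof -
  obtain q where q: "S = d * q" using assms(3) by auto
  have "d * (- q) \<le> - A" using assms q by simp
  hence "(d * (- q)) div d \<le> (- A) div d" using assms(2) by (rule zdiv_mono1)
  moreover have "(d * (- q)) div d = - q" using assms(2) by (rule nonzero_mult_div_cancel_left[OF less_imp_neq[symmetric]])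
  ultimately have "- q \<le> (- A) div d" by simp
  thus ?thesis using q assms(2) by simp
qed

lemma sound:
  assumes "cp_derivable F p" "\<forall>C\<in>F. sat \<beta> C"
  shows "lsat \<beta> p"
  using assms(1)
proof (induction rule: cp_derivable.induct)
  case (cp_axiom C)
  then show ?case using assms(2) sat_lin by blast
next
  case (cp_lit_pos x)
  have "{y. (if y = x then 1 else 0::int) \<noteq> 0} = {x}" by auto
  then show ?case by (simp add: lsat_def bv_def)
next
  case (cp_lit_neg x)
  have "{y. (if y = x then -1 else 0::int) \<noteq> 0} = {x}" by auto
  then show ?case by (simp add: lsat_def bv_def)
next
  case (cp_add c A d B)
  let ?V = "{x. c x \<noteq> 0} \<union> {x. d x \<noteq> 0}"
  have fc: "finite {x. c x \<noteq> 0}" and fd: "finite {x. d x \<noteq> 0}"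
    using cp_add by (auto simp: lsat_def)
  have fV: "finite ?V" using fc fd by simp
  have s1: "(\<Sum>x\<in>{x. c x \<noteq> 0}. c x * bv \<beta> x) = (\<Sum>x\<in>?V. c x * bv \<beta> x)"
    by (rule supp_sum[OF fV]) auto
  have s2: "(\<Sum>x\<in>{x. d x \<noteq> 0}. d x * bv \<beta> x) = (\<Sum>x\<in>?V. d x * bv \<beta> x)"
    by (rule supp_sum[OF fV]) auto
  have sub: "{x. c x + d x \<noteq> 0} \<subseteq> ?V" by auto
  have s3: "(\<Sum>x\<in>{x. c x + d x \<noteq> 0}. (c x + d x) * bv \<beta> x) = (\<Sum>x\<in>?V. (c x + d x) * bv \<beta> x)"
    by (rule supp_sum[OF fV sub])
  have "finite {x. c x + d x \<noteq> 0}" by (rule finite_subset[OF sub fV])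
  moreover have "A + B \<le> (\<Sum>x\<in>?V. (c x + d x) * bv \<beta> x)"
    using cp_add s1 s2 by (simp add: lsat_def distrib_right sum.distrib)
  ultimately show ?case using s3 by (simp add: lsat_def)
next
  case (cp_mult c A k)
  have e: "{x. k * c x \<noteq> 0} = {x. c x \<noteq> 0}" using cp_mult by auto
  have "k * A \<le> k * (\<Sum>x\<in>{x. c x \<noteq> 0}. c x * bv \<beta> x)"
    using cp_mult by (simp add: lsat_def)
  then show ?case using cp_mult e by (simp add: lsat_def sum_distrib_left mult.assoc)
next
  case (cp_div c A d)
  have dv: "\<forall>x. d dvd c x" and dpos: "d > 0" using cp_div by blast+
  have sub: "{x. c x div d \<noteq> 0} \<subseteq> {x. c x \<noteq> 0}" by auto
  have fc: "finite {x. c x \<noteq> 0}" using cp_div by (simp add: lsat_def)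
  have s: "(\<Sum>x\<in>{x. c x div d \<noteq> 0}. c x div d * bv \<beta> x) = (\<Sum>x\<in>{x. c x \<noteq> 0}. c x div d * bv \<beta> x)"
    by (rule supp_sum[OF fc sub])
  have "(\<Sum>x\<in>{x. c x \<noteq> 0}. c x div d * bv \<beta> x) = (\<Sum>x\<in>{x. c x \<noteq> 0}. c x * bv \<beta> x) div d"
  proof -
    have "(\<Sum>x\<in>{x. c x \<noteq> 0}. c x * bv \<beta> x) = d * (\<Sum>x\<in>{x. c x \<noteq> 0}. c x div d * bv \<beta> x)"
      unfolding sum_distrib_left mult.assoc[symmetric]
      by (rule sum.cong) (use dv in \<open>auto simp: dvd_mult_div_cancel\<close>)
    thus ?thesis using dpos by simp
  qed
  moreover have "- ((- A) div d) \<le> (\<Sum>x\<in>{x. c x \<noteq> 0}. c x * bv \<beta> x) div d"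
    apply (rule div_ceil_le)
    using cp_div apply (simp add: lsat_def)
    using cp_div apply simp
    using dv by (simp add: dvd_sum)
  moreover have "finite {x. c x div d \<noteq> 0}" by (rule finite_subset[OF sub fc])
  ultimately show ?case using s by (simp add: lsat_def)
qed

lemma lneg_val: "lit_val \<beta> (lneg l) = (\<not> lit_val \<beta> l)"
  by (cases l) auto

lemma neg_sum: "(\<Sum>(a, l)\<leftarrow>map (\<lambda>(a, l). (a, lneg l)) ts. a * (if lit_val \<beta> l then 1 else 0))
   = (\<Sum>(a, l)\<leftarrow>ts. a) - (\<Sum>(a, l)\<leftarrow>ts. a * (if lit_val \<beta> l then 1 else 0::int))"
  by (induction ts) (auto simp: lneg_val)

lemma sat_neg: "\<not> sat \<beta> C \<Longrightarrow> sat \<beta> (pbc_neg C)"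
proof -
  assume a: "\<not> sat \<beta> C"
  have "sat \<beta> (pbc_neg C) \<longleftrightarrow> (\<Sum>(a, l)\<leftarrow>map (\<lambda>(a, l). (a, lneg l)) (terms C). a * (if lit_val \<beta> l then 1 else 0))
     \<ge> (\<Sum>(a, l)\<leftarrow>terms C. a) - degree C + 1"
    unfolding sat_def pbc_neg_def by (simp only: pbc.select_convs)
  with a show ?thesis unfolding neg_sum sat_def by linarith
qed

fun sv :: "('v \<Rightarrow> bool) \<Rightarrow> 'v sval \<Rightarrow> bool" where
  "sv \<beta> (SConst b) = b"
| "sv \<beta> (SLit l) = lit_val \<beta> l"

lemma sv_subst: "sv \<beta> (subst_lit \<omega> l) = lit_val (\<lambda>x. sv \<beta> (\<omega> x)) l"
proof (cases l)
  case (Neg x)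
  then show ?thesis by (cases "\<omega> x") (auto simp: lneg_val)
qed simp

lemma restrict_sum:
  "(\<Sum>(a, l)\<leftarrow>concat (map (\<lambda>(a, l). case subst_lit \<omega> l of SLit l' \<Rightarrow> [(a, l')] | SConst _ \<Rightarrow> []) ts).
       a * (if lit_val \<beta> l then 1 else 0))
   + (\<Sum>(a, l)\<leftarrow>ts. if subst_lit \<omega> l = SConst True then a else 0)
   = (\<Sum>(a, l)\<leftarrow>ts. a * (if lit_val (\<lambda>x. sv \<beta> (\<omega> x)) l then 1 else 0::int))"
proof (induction ts)
  case Nil
  then show ?case by simp
next
  case (Cons t ts)
  obtain a l where t: "t = (a, l)" by (cases t)
  have h: "sv \<beta> (subst_lit \<omega> l) = lit_val (\<lambda>x. sv \<beta> (\<omega> x)) l" by (rule sv_subst)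
  show ?case
  proof (cases "subst_lit \<omega> l")
    case (SConst b)
    then show ?thesis using Cons h by (cases b) (auto simp: t)
  next
    case (SLit l')
    then show ?thesis using Cons h by (auto simp: t)
  qed
qed

lemma sat_restrict: "sat \<beta> (restrict C \<omega>) \<Longrightarrow> sat (\<lambda>x. sv \<beta> (\<omega> x)) C"
  using restrict_sum[where \<omega>=\<omega> and ts="terms C" and \<beta>=\<beta>]
  unfolding sat_def restrict_def by simp

lemma main_step:
  assumes disj: "set xs \<inter> set as = {}"
    and spec: "is_specification S (set as)"
  shows "k \<le> length S \<Longrightarrow> \<exists>\<beta> :: 'v \<Rightarrow> bool. (\<forall>C \<in> set (take k S). sat \<beta> C) \<and> (\<forall>x \<in> set xs. \<beta> x = \<alpha> x)"
proof (induction k)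
  case 0
  then show ?case by auto
next
  case (Suc k)
  then obtain \<beta> where b1: "\<forall>C \<in> set (take k S). sat \<beta> C" and b2: "\<forall>x \<in> set xs. \<beta> x = \<alpha> x"
    by auto
  have kl: "k < length S" using Suc by simp
  have tk: "take (Suc k) S = take k S @ [S ! k]" using kl by (simp add: take_Suc_conv_app_nth)
  show ?case
  proof (cases "sat \<beta> (S ! k)")
    case True
    then show ?thesis using b1 b2 tk by auto
  next
    case False
    obtain \<omega> where om: "\<forall>i < length S. supp (\<omega> i) \<subseteq> set as \<and>
          cp_derives (set (take i S) \<union> {pbc_neg (S ! i)})
                     ((\<lambda>C. restrict C (\<omega> i)) ` set (take (Suc i) S))"
      using spec unfolding is_specification_def by blast
    have sp: "supp (\<omega> k) \<subseteq> set as" and cd: "cp_derives (set (take k S) \<union> {pbc_neg (S ! k)})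
                     ((\<lambda>C. restrict C (\<omega> k)) ` set (take (Suc k) S))" using om kl by auto
    have fs: "\<forall>C \<in> set (take k S) \<union> {pbc_neg (S ! k)}. sat \<beta> C"
      using b1 sat_neg[OF False] by auto
    define \<beta>' where "\<beta>' = (\<lambda>x. sv \<beta> (\<omega> k x))"
    have "\<forall>C \<in> set (take (Suc k) S). sat \<beta>' C"
    proof
      fix C assume "C \<in> set (take (Suc k) S)"
      hence "cp_derivable (set (take k S) \<union> {pbc_neg (S ! k)}) (lin (restrict C (\<omega> k)))"
        using cd unfolding cp_derives_def by auto
      hence "lsat \<beta> (lin (restrict C (\<omega> k)))" using sound fs by blast
      hence "sat \<beta> (restrict C (\<omega> k))" using sat_lin by blast
      thus "sat \<beta>' C" unfolding \<beta>'_def by (rule sat_restrict)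
    qed
    moreover have "\<forall>x \<in> set xs. \<beta>' x = \<alpha> x"
    proof
      fix x assume x: "x \<in> set xs"
      hence "x \<notin> supp (\<omega> k)" using sp disj by auto
      hence "\<omega> k x = SLit (Pos x)" by (simp add: supp_def)
      thus "\<beta>' x = \<alpha> x" using b2 x by (simp add: \<beta>'_def)
    qed
    ultimately show ?thesis by blast
  qed
qed

theorem lemma1:
  fixes S :: "'v pbc list" and xs as :: "'v list" and \<alpha> :: "'v \<Rightarrow> bool"
  assumes "set xs \<inter> set as = {}"
    and "\<forall>C \<in> set S. pbc_vars C \<subseteq> set xs \<union> set as"
    and "is_specification S (set as)"
  shows "\<exists>\<beta> :: 'v \<Rightarrow> bool. (\<forall>C \<in> set S. sat \<beta> C) \<and> (\<forall>x \<in> set xs. \<beta> x = \<alpha> x)"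
  using main_step[OF assms(1) assms(3), of "length S" \<alpha>] by simp

end
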